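(* For every $n\geq0$, the dimension of the $n$th graded component of the quotient $\mathbf{ASM}/\mathcal{I}_{\operatorname{nw}}$ is $\binom{n}{2}+1$.
   Context: An ASM of size $n$ is an $n\times n$ matrix over $\{0,1,-1\}$ whose nonzero entries in every row and column alternate in sign, starting and ending with $+1$. For an ASM $\delta$, $\operatorname{nw}(\delta)$ is the number of positions $(i,j)$ with $\delta_{ij}=0$, $\sum_{i'<i}\delta_{i'j}=0$ and $\sum_{j'<j}\delta_{ij'}=1$ (the number of vertices of type nw in the associated six-vertex configuration with domain wall boundary conditions). $\mathbf{ASM}$ is the graded vector space (over $\mathbb{K}$ of characteristic zero) with basis $(\mathbf{F}_{M^\delta})$ indexed by ASMs, graded by size. $\mathcal{I}_{\operatorname{nw}}$ is the subspace spanned by all $\mathbf{F}_{M^{\delta_1}}-\mathbf{F}_{M^{\delta_2}}$ with $\delta_1,\delta_2$ ASMs of the same size satisfying $\operatorname{nw}(\delta_1)=\operatorname{nw}(\delta_2)$; the quotient is graded by size. *)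

theory Defs
  imports Complex_Main "HOL-Library.Function_Algebras"
begin

text \<open>A matrix of size n is represented as a function nat => nat => int, with the
  convention that entries outside the index range i, j < n are 0.\<close>
type_synonym mat = "nat \<Rightarrow> nat \<Rightarrow> int"

definition alternating :: "int list \<Rightarrow> bool" where
  "alternating xs \<longleftrightarrow> xs \<noteq> [] \<and> hd xs = 1 \<and> last xs = 1 \<and>
     (\<forall>k. Suc k < length xs \<longrightarrow> xs ! Suc k = - (xs ! k))"

definition is_ASM :: "nat \<Rightarrow> mat \<Rightarrow> bool" where
  "is_ASM n d \<longleftrightarrow>
     (\<forall>i j. d i j \<in> {0, 1, -1}) \<and>
     (\<forall>i j. (n \<le> i \<or> n \<le> j) \<longrightarrow> d i j = 0) \<and>
     (\<forall>i<n. alternating (filter (\<lambda>x. x \<noteq> 0) (map (\<lambda>j. d i j) [0..<n]))) \<and>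
     (\<forall>j<n. alternating (filter (\<lambda>x. x \<noteq> 0) (map (\<lambda>i. d i j) [0..<n])))"

definition ASMs :: "nat \<Rightarrow> mat set" where
  "ASMs n = {d. is_ASM n d}"

definition nw :: "nat \<Rightarrow> mat \<Rightarrow> nat" where
  "nw n d = card {(i, j). i < n \<and> j < n \<and> d i j = 0 \<and>
                   (\<Sum>i'<i. d i' j) = 0 \<and> (\<Sum>j'<j. d i j') = 1}"

text \<open>The space ASM: formal linear combinations of ASMs, i.e. finitely supported
  functions mat => 'k; the basis vector F_{M^d} is the indicator of d.\<close>
definition F :: "mat \<Rightarrow> mat \<Rightarrow> 'k::field" where
  "F d = (\<lambda>x. if x = d then 1 else 0)"

definition fscale :: "'k::field \<Rightarrow> (mat \<Rightarrow> 'k) \<Rightarrow> (mat \<Rightarrow> 'k)" where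
  "fscale c f = (\<lambda>x. c * f x)"

definition ASM_comp :: "nat \<Rightarrow> (mat \<Rightarrow> 'k::field) set" where
  "ASM_comp n = module.span fscale (F ` ASMs n)"

text \<open>n-th graded component of I_nw (differences of basis vectors of equal size, so
  the ideal is homogeneous and its degree-n part is spanned by size-n differences).\<close>
definition Inw_comp :: "nat \<Rightarrow> (mat \<Rightarrow> 'k::field) set" where
  "Inw_comp n = module.span fscale
     {F d1 - F d2 | d1 d2. d1 \<in> ASMs n \<and> d2 \<in> ASMs n \<and> nw n d1 = nw n d2}"

definition quot_dim :: "(mat \<Rightarrow> 'k::field) set \<Rightarrow> (mat \<Rightarrow> 'k) set \<Rightarrow> nat" where
  "quot_dim V W = vector_space.dim fscale V - vector_space.dim fscale W"

end

theory Submission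
  imports Defs "HOL-Library.FuncSet"
begin


lemma alt_nth: "alternating ys \<Longrightarrow> k < length ys \<Longrightarrow> ys ! k = (-1) ^ k"
proof (induction k)
  case 0 then show ?case by (auto simp: alternating_def hd_conv_nth)
next
  case (Suc k) then show ?case by (auto simp: alternating_def)
qed

lemma alt_sum_pow: "(\<Sum>k<m. (-1::int) ^ k) = (if even m then 0 else 1)"
  by (induction m) auto

lemma sum_list_take_nth: "sum_list (take m ys) = (\<Sum>k<min m (length ys). ys ! k)"
  by (simp add: sum_list_sum_nth min_def atLeast0LessThan)

lemma alt_take: "alternating ys \<Longrightarrow> sum_list (take m ys) \<in> {0, 1}"
proof -
  assume a: "alternating ys"
  have "sum_list (take m ys) = (\<Sum>k<min m (length ys). (-1::int) ^ k)"
    unfolding sum_list_take_nth using alt_nth[OF a] by (intro sum.cong) auto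
  then show ?thesis by (simp add: alt_sum_pow)
qed

lemma alt_total: "alternating ys \<Longrightarrow> sum_list ys = 1"
proof -
  assume a: "alternating ys"
  have ne: "ys \<noteq> []" and l: "last ys = 1" using a by (auto simp: alternating_def)
  have "ys ! (length ys - 1) = (-1) ^ (length ys - 1)"
    using ne by (intro alt_nth[OF a]) auto
  with l ne have "(-1::int) ^ (length ys - 1) = 1" by (simp add: last_conv_nth)
  then have "even (length ys - 1)" by (metis neg_one_odd_power one_neq_neg_one)
  with ne have o: "odd (length ys)" by (cases "length ys") auto
  have "sum_list ys = sum_list (take (length ys) ys)" by simp
  also have "\<dots> = (\<Sum>k<length ys. (-1::int) ^ k)"
    unfolding sum_list_take_nth using alt_nth[OF a] by (intro sum.cong) auto
  finally show ?thesis using o by (simp add: alt_sum_pow)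
qed

lemma filter_take_prefix:
  "filter P (take k xs) = take (length (filter P (take k xs))) (filter P xs)"
proof -
  have "filter P xs = filter P (take k xs) @ filter P (drop k xs)"
    by (metis append_take_drop_id filter_append)
  then show ?thesis by (metis append_eq_conv_conj)
qed

lemma prefix01:
  fixes xs :: "int list"
  assumes "alternating (filter (\<lambda>x. x \<noteq> 0) xs)"
  shows "sum_list (take k xs) \<in> {0, 1}"
proof -
  have "sum_list (take k xs) = sum_list (filter (\<lambda>x. x \<noteq> 0) (take k xs))"
    using sum_list_map_filter[of "take k xs" "\<lambda>x. x \<noteq> 0" id] by simp
  also have "\<dots> = sum_list (take (length (filter (\<lambda>x. x \<noteq> 0) (take k xs))) (filter (\<lambda>x. x \<noteq> 0) xs))"
    by (subst filter_take_prefix) simp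
  finally show ?thesis using alt_take[OF assms] by simp
qed

lemma total1:
  fixes xs :: "int list"
  assumes "alternating (filter (\<lambda>x. x \<noteq> 0) xs)"
  shows "sum_list xs = 1"
  using sum_list_map_filter[of xs "\<lambda>x. x \<noteq> 0" id] alt_total[OF assms] by simp

lemma sum_take_map: "i \<le> n \<Longrightarrow> (\<Sum>i'<i. f i') = sum_list (take i (map f [0..<n]))"
  by (simp add: take_map sum_list_sum_nth atLeast0LessThan[symmetric] min_def)
     

lemma ASM_col01:
  assumes "is_ASM n d" "j < n" "i \<le> n"
  shows "(\<Sum>i'<i. d i' j) \<in> {0, 1}"
proof -
  have "alternating (filter (\<lambda>x. x \<noteq> 0) (map (\<lambda>i. d i j) [0..<n]))"
    using assms by (auto simp: is_ASM_def)
  from prefix01[OF this, of i] show ?thesis using sum_take_map[OF assms(3)] by metis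
qed

lemma ASM_row01:
  assumes "is_ASM n d" "i < n" "j \<le> n"
  shows "(\<Sum>j'<j. d i j') \<in> {0, 1}"
proof -
  have "alternating (filter (\<lambda>x. x \<noteq> 0) (map (\<lambda>j. d i j) [0..<n]))"
    using assms by (auto simp: is_ASM_def)
  from prefix01[OF this, of j] show ?thesis using sum_take_map[OF assms(3)] by metis
qed

lemma ASM_rowsum:
  assumes "is_ASM n d" "i < n"
  shows "(\<Sum>j<n. d i j) = 1"
proof -
  have "alternating (filter (\<lambda>x. x \<noteq> 0) (map (\<lambda>j. d i j) [0..<n]))"
    using assms by (auto simp: is_ASM_def)
  from total1[OF this] show ?thesis using sum_take_map[of n n "\<lambda>j. d i j"] by simp
qed

lemma ASM_has_one:
  assumes "is_ASM n d" "i < n"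
  shows "\<exists>j<n. d i j = 1"
proof -
  let ?ys = "filter (\<lambda>x. x \<noteq> 0) (map (\<lambda>j. d i j) [0..<n])"
  have a: "alternating ?ys" using assms by (auto simp: is_ASM_def)
  then have "?ys \<noteq> []" "hd ?ys = 1" by (auto simp: alternating_def)
  then have "1 \<in> set ?ys" by (metis list.set_sel(1))
  then show ?thesis by auto
qed

lemma card_Z:
  assumes "is_ASM n d" "i \<le> n"
  shows "card {j. j < n \<and> (\<Sum>i'<i. d i' j) = 0} = n - i"
proof -
  let ?c = "\<lambda>j. (\<Sum>i'<i. d i' j)"
  have "(\<Sum>j<n. ?c j) = (\<Sum>i'<i. \<Sum>j<n. d i' j)" by (rule sum.swap)
  also have "\<dots> = (\<Sum>i'<i. 1)" using assms ASM_rowsum by (intro sum.cong) auto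
  finally have s: "(\<Sum>j<n. ?c j) = int i" by simp
  have "(\<Sum>j<n. ?c j) = (\<Sum>j<n. if ?c j = 1 then 1 else 0)"
    using ASM_col01[OF assms(1) _ assms(2)] by (intro sum.cong) auto
  also have "\<dots> = (\<Sum>j\<in>{j\<in>{..<n}. ?c j = 1}. 1)"
    by (rule sum.inter_filter[symmetric]) simp
  also have "\<dots> = int (card {j\<in>{..<n}. ?c j = 1})" by simp
  finally have c1: "card {j\<in>{..<n}. ?c j = 1} = i" using s by simp
  have "{j. j < n \<and> ?c j = 0} = {..<n} - {j\<in>{..<n}. ?c j = 1}"
    using ASM_col01[OF assms(1) _ assms(2)] by auto
  moreover have "{j. j < n \<and> ?c j = 1} \<subseteq> {..<n}" by auto
  ultimately show ?thesis using c1 by (simp add: card_Diff_subset)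
qed

lemma sum_stair: "(\<Sum>i<n. n - 1 - i) = n choose 2"
proof (induction n)
  case 0 then show ?case by simp
next
  case (Suc n)
  have "(\<Sum>i<Suc n. Suc n - 1 - i) = (\<Sum>i<n. Suc n - 1 - i) + 0" by simp
  also have "(\<Sum>i<n. Suc n - 1 - i) = (\<Sum>i<n. (n - 1 - i) + 1)"
    by (intro sum.cong) auto
  also have "\<dots> = (\<Sum>i<n. (n - 1 - i)) + n" by (subst sum.distrib) simp
  also have "\<dots> = (n choose 2) + n" using Suc by simp
  finally show ?case by (simp add: choose_two) (cases n; simp add: algebra_simps)
qed

lemma nw_le:
  assumes "is_ASM n d"
  shows "nw n d \<le> n choose 2"
proof -
  let ?c = "\<lambda>i j. (\<Sum>i'<i. d i' j)"
  define T where "T i = {j. j < n \<and> d i j = 0 \<and> ?c i j = 0 \<and> (\<Sum>j'<j. d i j') = 1}" for i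
  have eq: "{(i, j). i < n \<and> j < n \<and> d i j = 0 \<and> ?c i j = 0 \<and> (\<Sum>j'<j. d i j') = 1} = Sigma {..<n} T"
    by (auto simp: T_def)
  have fin: "finite (T i)" for i by (auto simp: T_def)
  have bound: "card (T i) \<le> n - 1 - i" if ilt: "i < n" for i
  proof -
    obtain p where p: "p < n" "d i p = 1" using ASM_has_one[OF assms ilt] by auto
    have "?c (Suc i) p \<in> {0,1}" using ASM_col01[OF assms p(1), of "Suc i"] ilt by simp
    then have cp: "?c i p = 0" using p ASM_col01[OF assms p(1), of i] that by auto
    have "T i \<subseteq> {j. j < n \<and> ?c i j = 0} - {p}" using p by (auto simp: T_def)
    then have "card (T i) \<le> card ({j. j < n \<and> ?c i j = 0} - {p})" by (intro card_mono) auto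
    also have "\<dots> = n - i - 1" using card_Z[OF assms, of i] that p cp by simp
    finally show ?thesis by simp
  qed
  have "nw n d = card (Sigma {..<n} T)" unfolding nw_def eq ..
  also have "\<dots> = (\<Sum>i<n. card (T i))" using fin by (simp add: card_SigmaI)
  also have "\<dots> \<le> (\<Sum>i<n. n - 1 - i)" using bound by (intro sum_mono) auto
  also have "\<dots> = n choose 2" by (rule sum_stair)
  finally show ?thesis .
qed



definition pm :: "nat \<Rightarrow> (nat \<Rightarrow> nat) \<Rightarrow> mat" where
  "pm n \<sigma> = (\<lambda>i j. if i < n \<and> j < n \<and> \<sigma> i = j then 1 else 0)"

definition NI :: "nat \<Rightarrow> (nat \<Rightarrow> nat) \<Rightarrow> nat" where
  "NI n \<sigma> = card {(i, i'). i < i' \<and> i' < n \<and> \<sigma> i < \<sigma> i'}"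

lemma filter_single:
  "filter (\<lambda>x. x \<noteq> 0) (map (\<lambda>j. if j = a then (1::int) else 0) [0..<n]) = (if a < n then [1] else [])"
  by (induction n) auto

lemma alt_one: "alternating [1]" by (simp add: alternating_def)

lemma pm_ASM:
  assumes b: "bij_betw \<sigma> {..<n} {..<n}"
  shows "is_ASM n (pm n \<sigma>)"
proof -
  let ?\<tau> = "inv_into {..<n} \<sigma>"
  have s: "\<sigma> i < n" if "i < n" for i using b that by (auto simp: bij_betw_def)
  have t: "?\<tau> j < n" if "j < n" for j
    using bij_betw_inv_into[OF b] that by (auto simp: bij_betw_def)
  have st: "\<sigma> (?\<tau> j) = j" if "j < n" for j using bij_betw_inv_into_right[OF b] that by auto
  have ts: "?\<tau> (\<sigma> i) = i" if "i < n" for i using bij_betw_inv_into_left[OF b] that by auto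
  have row: "map (\<lambda>j. pm n \<sigma> i j) [0..<n] = map (\<lambda>j. if j = \<sigma> i then 1 else 0) [0..<n]" if "i < n" for i
    using that by (auto simp: pm_def)
  have col: "map (\<lambda>i. pm n \<sigma> i j) [0..<n] = map (\<lambda>i. if i = ?\<tau> j then 1 else 0) [0..<n]" if "j < n" for j
    using that st ts by (auto simp: pm_def)
  show ?thesis
    unfolding is_ASM_def
  proof (intro conjI allI impI)
    fix i assume i: "i < n"
    show "alternating (filter (\<lambda>x. x \<noteq> 0) (map (\<lambda>j. pm n \<sigma> i j) [0..<n]))"
      using s[OF i] by (subst row[OF i]) (simp add: filter_single alt_one)
  next
    fix j assume j: "j < n"
    show "alternating (filter (\<lambda>x. x \<noteq> 0) (map (\<lambda>i. pm n \<sigma> i j) [0..<n]))"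
      using t[OF j] by (subst col[OF j]) (simp add: filter_single alt_one)
  qed (auto simp: pm_def)
qed

lemma nw_pm:
  assumes b: "bij_betw \<sigma> {..<n} {..<n}"
  shows "nw n (pm n \<sigma>) = NI n \<sigma>"
proof -
  let ?\<tau> = "inv_into {..<n} \<sigma>"
  have s: "\<sigma> i < n" if "i < n" for i using b that by (auto simp: bij_betw_def)
  have t: "?\<tau> j < n" if "j < n" for j
    using bij_betw_inv_into[OF b] that by (auto simp: bij_betw_def)
  have st: "\<sigma> (?\<tau> j) = j" if "j < n" for j using bij_betw_inv_into_right[OF b] that by auto
  have ts: "?\<tau> (\<sigma> i) = i" if "i < n" for i using bij_betw_inv_into_left[OF b] that by auto
  have r: "(\<Sum>j'<j. pm n \<sigma> i j') = (if \<sigma> i < j then 1 else 0)" if "i < n" "j < n" for i j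
  proof -
    have "(\<Sum>j'<j. pm n \<sigma> i j') = (\<Sum>j'<j. if \<sigma> i = j' then 1 else 0)"
      using that by (intro sum.cong) (auto simp: pm_def)
    also have "\<dots> = (if \<sigma> i < j then 1 else 0)" by (simp add: sum.delta)
    finally show ?thesis .
  qed
  have c: "(\<Sum>i'<i. pm n \<sigma> i' j) = (if ?\<tau> j < i then 1 else 0)" if "i < n" "j < n" for i j
  proof -
    have "(\<Sum>i'<i. pm n \<sigma> i' j) = (\<Sum>i'<i. if i' = ?\<tau> j then 1 else 0)"
      using that st ts by (intro sum.cong) (auto simp: pm_def)
    also have "\<dots> = (if ?\<tau> j < i then 1 else 0)" by (simp add: sum.delta)
    finally show ?thesis .
  qed
  have z: "pm n \<sigma> i j = 0 \<longleftrightarrow> i \<noteq> ?\<tau> j" if "i < n" "j < n" for i j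
    using that st ts by (auto simp: pm_def)
  have S: "{(i, j). i < n \<and> j < n \<and> pm n \<sigma> i j = 0 \<and> (\<Sum>i'<i. pm n \<sigma> i' j) = 0 \<and> (\<Sum>j'<j. pm n \<sigma> i j') = 1}
      = {(i, j). i < n \<and> j < n \<and> \<sigma> i < j \<and> i < ?\<tau> j}"
    by (auto simp: r c z split: if_splits)
  have inj: "inj_on (\<lambda>(i, j). (i, ?\<tau> j)) {(i, j). i < n \<and> j < n \<and> \<sigma> i < j \<and> i < ?\<tau> j}"
    by (auto simp: inj_on_def) (metis st)
  have img: "(\<lambda>(i, j). (i, ?\<tau> j)) ` {(i, j). i < n \<and> j < n \<and> \<sigma> i < j \<and> i < ?\<tau> j}
      = {(i, i'). i < i' \<and> i' < n \<and> \<sigma> i < \<sigma> i'}"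
  proof (intro equalityI subsetI)
    fix x assume "x \<in> (\<lambda>(i, j). (i, ?\<tau> j)) ` {(i, j). i < n \<and> j < n \<and> \<sigma> i < j \<and> i < ?\<tau> j}"
    then show "x \<in> {(i, i'). i < i' \<and> i' < n \<and> \<sigma> i < \<sigma> i'}" using t st by auto
  next
    fix x assume "x \<in> {(i, i'). i < i' \<and> i' < n \<and> \<sigma> i < \<sigma> i'}"
    then obtain i i' where x: "x = (i, i')" "i < i'" "i' < n" "\<sigma> i < \<sigma> i'" by auto
    then have "(i, \<sigma> i') \<in> {(i, j). i < n \<and> j < n \<and> \<sigma> i < j \<and> i < ?\<tau> j}" using s ts by auto
    moreover have "x = (\<lambda>(i, j). (i, ?\<tau> j)) (i, \<sigma> i')" using x ts by auto
    ultimately show "x \<in> (\<lambda>(i, j). (i, ?\<tau> j)) ` {(i, j). i < n \<and> j < n \<and> \<sigma> i < j \<and> i < ?\<tau> j}" by blast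
  qed
  show ?thesis unfolding nw_def NI_def S using card_image[OF inj] img by simp
qed



definition shk :: "nat \<Rightarrow> nat \<Rightarrow> nat" where
  "shk k x = (if x < k then x else Suc x)"

definition ins :: "nat \<Rightarrow> (nat \<Rightarrow> nat) \<Rightarrow> nat \<Rightarrow> nat" where
  "ins k \<sigma> i = (if i = 0 then k else shk k (\<sigma> (i - 1)))"

lemma shk_less: "shk k x < shk k y \<longleftrightarrow> x < y"
  by (auto simp: shk_def)

lemma shk_ne: "shk k x \<noteq> k" by (auto simp: shk_def)

lemma ins_bij:
  assumes b: "bij_betw \<sigma> {..<n} {..<n}" and k: "k \<le> n"
  shows "bij_betw (ins k \<sigma>) {..<Suc n} {..<Suc n}"
proof -
  have s: "\<sigma> i < n" if "i < n" for i using b that by (auto simp: bij_betw_def)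
  have injs: "inj_on \<sigma> {..<n}" using b by (auto simp: bij_betw_def)
  have inj: "inj_on (ins k \<sigma>) {..<Suc n}"
  proof (rule inj_onI)
    fix x y assume x: "x \<in> {..<Suc n}" and y: "y \<in> {..<Suc n}" and e: "ins k \<sigma> x = ins k \<sigma> y"
    show "x = y"
    proof (cases "x = 0"; cases "y = 0")
      assume "x \<noteq> 0" "y \<noteq> 0"
      then have "shk k (\<sigma> (x - 1)) = shk k (\<sigma> (y - 1))" using e by (simp add: ins_def)
      then have "\<sigma> (x - 1) = \<sigma> (y - 1)" by (metis shk_less nat_neq_iff)
      then have "x - 1 = y - 1" using injs x y \<open>x \<noteq> 0\<close> \<open>y \<noteq> 0\<close> by (auto simp: inj_on_def)
      then show ?thesis using \<open>x \<noteq> 0\<close> \<open>y \<noteq> 0\<close> by simp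
    qed (use e shk_ne in \<open>auto simp: ins_def dest: sym\<close>)
  qed
  have sub: "ins k \<sigma> ` {..<Suc n} \<subseteq> {..<Suc n}"
    using k s by (auto simp: ins_def shk_def)
  have "card (ins k \<sigma> ` {..<Suc n}) = Suc n" using card_image[OF inj] by simp
  then have "ins k \<sigma> ` {..<Suc n} = {..<Suc n}" using sub by (intro card_subset_eq) auto
  then show ?thesis using inj by (simp add: bij_betw_def)
qed

lemma NI_ins:
  assumes b: "bij_betw \<sigma> {..<n} {..<n}" and k: "k \<le> n"
  shows "NI (Suc n) (ins k \<sigma>) = NI n \<sigma> + (n - k)"
proof -
  let ?P = "{(i, i'). i < i' \<and> i' < n \<and> \<sigma> i < \<sigma> i'}"
  let ?A = "Pair (0::nat) ` (Suc ` {i. i < n \<and> k \<le> \<sigma> i})"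
  let ?B = "(\<lambda>(a, b). (Suc a, Suc b)) ` ?P"
  have eq: "{(i, i'). i < i' \<and> i' < Suc n \<and> ins k \<sigma> i < ins k \<sigma> i'} = ?A \<union> ?B"
  proof (intro equalityI subsetI)
    fix x assume "x \<in> {(i, i'). i < i' \<and> i' < Suc n \<and> ins k \<sigma> i < ins k \<sigma> i'}"
    then obtain i i' where x: "x = (i, i')" "i < i'" "i' < Suc n" "ins k \<sigma> i < ins k \<sigma> i'" by auto
    obtain j' where j': "i' = Suc j'" using x by (cases i') auto
    show "x \<in> ?A \<union> ?B"
    proof (cases i)
      case 0
      then have "k \<le> \<sigma> j'" using x j' by (auto simp: ins_def shk_def split: if_splits)
      then show ?thesis using x j' 0 by auto
    next
      case (Suc j)
      then have "\<sigma> j < \<sigma> j'" using x j' by (auto simp: ins_def shk_less)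
      then have "(j, j') \<in> ?P" using x j' Suc by auto
      then show ?thesis using x j' Suc by force
    qed
  next
    fix x assume "x \<in> ?A \<union> ?B"
    then show "x \<in> {(i, i'). i < i' \<and> i' < Suc n \<and> ins k \<sigma> i < ins k \<sigma> i'}"
      by (auto simp: ins_def shk_def)
  qed
  have dis: "?A \<inter> ?B = {}" by auto
  have finP: "finite ?P" by (rule finite_subset[of _ "{..<n} \<times> {..<n}"]) auto
  have cB: "card ?B = card ?P" by (rule card_image) (auto simp: inj_on_def)
  have "card ?A = card {i. i < n \<and> k \<le> \<sigma> i}"
    by (simp add: card_image inj_on_def)
  also have "\<dots> = card {k..<n}"
  proof -
    have inj: "inj_on \<sigma> {i. i < n \<and> k \<le> \<sigma> i}" using b by (auto simp: bij_betw_def inj_on_def)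
    have "\<sigma> ` {i. i < n \<and> k \<le> \<sigma> i} = {k..<n}"
    proof (intro equalityI subsetI)
      fix y assume "y \<in> \<sigma> ` {i. i < n \<and> k \<le> \<sigma> i}"
      then show "y \<in> {k..<n}" using b by (auto simp: bij_betw_def)
    next
      fix y assume y: "y \<in> {k..<n}"
      then have "y \<in> \<sigma> ` {..<n}" using b by (auto simp: bij_betw_def)
      then show "y \<in> \<sigma> ` {i. i < n \<and> k \<le> \<sigma> i}" using y by auto
    qed
    then show ?thesis using card_image[OF inj] by simp
  qed
  finally have cA: "card ?A = n - k" by simp
  have "NI (Suc n) (ins k \<sigma>) = card (?A \<union> ?B)" unfolding NI_def eq ..
  also have "\<dots> = card ?A + card ?B" by (rule card_Un_disjoint) (use dis finP in auto)
  finally show ?thesis using cA cB by (simp add: NI_def)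
qed

lemma NI_exists: "v \<le> n choose 2 \<Longrightarrow> \<exists>\<sigma>. bij_betw \<sigma> {..<n} {..<n} \<and> NI n \<sigma> = v"
proof (induction n arbitrary: v)
  case 0
  then show ?case by (intro exI[of _ id]) (auto simp: NI_def bij_betw_def binomial_eq_0)
next
  case (Suc n)
  define v0 where "v0 = min v (n choose 2)"
  define k where "k = n - (v - v0)"
  have "Suc n choose 2 = (n choose 2) + n" by (simp add: choose_two) (cases n; simp add: algebra_simps)
  then have vv: "v - v0 \<le> n" using Suc.prems by (auto simp: v0_def)
  obtain \<sigma> where s: "bij_betw \<sigma> {..<n} {..<n}" "NI n \<sigma> = v0" using Suc.IH[of v0] by (auto simp: v0_def)
  have kn: "k \<le> n" by (simp add: k_def)
  show ?case
    using ins_bij[OF s(1) kn] NI_ins[OF s(1) kn] s(2) vv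
    by (intro exI[of _ "ins k \<sigma>"]) (auto simp: k_def v0_def)
qed



lemma vs: "vector_space (fscale :: 'k::field \<Rightarrow> (mat \<Rightarrow> 'k) \<Rightarrow> _)"
  by unfold_locales (auto simp: fscale_def fun_eq_iff algebra_simps)

lemma sum_fun_apply: "(sum f S) x = (\<Sum>y\<in>S. f y x)"
  by (induction S rule: infinite_finite_induct) auto

lemma fin_ASMs: "finite (ASMs n)"
proof -
  let ?h = "\<lambda>f :: nat \<times> nat \<Rightarrow> int. \<lambda>i j. if i < n \<and> j < n then f (i, j) else 0"
  have "ASMs n \<subseteq> ?h ` (({..<n} \<times> {..<n}) \<rightarrow>\<^sub>E {0, 1, -1})"
  proof
    fix d assume "d \<in> ASMs n"
    then have d: "is_ASM n d" by (simp add: ASMs_def)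
    then have d1: "\<forall>i j. d i j \<in> {0, 1, -1}" and d2: "\<forall>i j. (n \<le> i \<or> n \<le> j) \<longrightarrow> d i j = 0"
      unfolding is_ASM_def by blast+
    have "d = ?h (restrict (\<lambda>(i, j). d i j) ({..<n} \<times> {..<n}))"
    proof (intro ext)
      fix i j show "d i j = ?h (restrict (\<lambda>(i, j). d i j) ({..<n} \<times> {..<n})) i j"
        using d2 by (cases "i < n \<and> j < n") auto
    qed
    moreover have "restrict (\<lambda>(i, j). d i j) ({..<n} \<times> {..<n}) \<in> ({..<n} \<times> {..<n}) \<rightarrow>\<^sub>E {0, 1, -1}"
      using d1 by auto
    ultimately show "d \<in> ?h ` (({..<n} \<times> {..<n}) \<rightarrow>\<^sub>E {0, 1, -1})" by blast
  qed
  moreover have "finite (({..<n} \<times> {..<n}) \<rightarrow>\<^sub>E ({0, 1, -1} :: int set))"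
    by (intro finite_PiE) auto
  ultimately show ?thesis using finite_subset finite_imageI by blast
qed

lemma F_apply: "F d x = (if x = d then 1 else 0)" by (simp add: F_def)

lemma inj_F: "inj (F :: mat \<Rightarrow> mat \<Rightarrow> 'k::field)"
proof (rule injI)
  fix x y assume "(F x :: mat \<Rightarrow> 'k) = F y"
  then have "(F x :: mat \<Rightarrow> 'k) x = F y x" by simp
  then show "x = y" by (simp add: F_def split: if_splits)
qed

lemma F_eq_iff: "(F a = F b) = (a = b)"
  using injD[OF inj_F] by metis

lemma indep_F: "module.independent fscale (F ` (S :: mat set) :: (mat \<Rightarrow> 'k::field) set)"
proof -
  interpret vector_space "fscale :: 'k \<Rightarrow> (mat \<Rightarrow> 'k) \<Rightarrow> _" by (rule vs)
  show ?thesis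
    unfolding dependent_explicit
  proof clarify
    fix T u v assume T: "finite T" "T \<subseteq> F ` S" "(\<Sum>v\<in>T. fscale (u v) v) = 0" "v \<in> T" "u v \<noteq> 0"
    obtain d where d: "v = F d" using T by auto
    have "0 = (\<Sum>w\<in>T. fscale (u w) w) d" using T by simp
    also have "\<dots> = (\<Sum>w\<in>T. u w * w d)" by (simp add: sum_fun_apply fscale_def)
    also have "\<dots> = (\<Sum>w\<in>T. if w = v then u w else 0)"
    proof (intro sum.cong refl)
      fix w assume "w \<in> T"
      then obtain e where e: "w = F e" using T by auto
      show "u w * w d = (if w = v then u w else 0)"
      proof (cases "e = d")
        case True then show ?thesis using d e by (simp add: F_apply)
      next
        case False
        then have "w \<noteq> v" using d e by (simp add: F_eq_iff)
        then show ?thesis using d e False by (simp add: F_apply)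
      qed
    qed
    also have "\<dots> = u v" using T by simp
    finally show False using T by simp
  qed
qed

lemma dim_ASM_comp: "vector_space.dim fscale (ASM_comp n :: (mat \<Rightarrow> 'k::field) set) = card (ASMs n)"
proof -
  interpret vector_space "fscale :: 'k \<Rightarrow> (mat \<Rightarrow> 'k) \<Rightarrow> _" by (rule vs)
  have "dim (ASM_comp n :: (mat \<Rightarrow> 'k) set) = dim (F ` ASMs n :: (mat \<Rightarrow> 'k) set)"
    unfolding ASM_comp_def by simp
  also have "\<dots> = card (F ` ASMs n :: (mat \<Rightarrow> 'k) set)" by (rule dim_eq_card_independent[OF indep_F])
  also have "\<dots> = card (ASMs n)" by (rule card_image[OF inj_on_subset[OF inj_F subset_UNIV]])
  finally show ?thesis .
qed


lemma Inw_dim: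
  fixes A :: "mat set" and g :: "mat \<Rightarrow> nat"
  assumes finA: "finite A"
  shows "vector_space.dim fscale (module.span fscale {F d1 - F d2 | d1 d2. d1 \<in> A \<and> d2 \<in> A \<and> g d1 = g d2} :: (mat \<Rightarrow> 'k::field) set)
     = card A - card (g ` A)"
proof -
  interpret vector_space "fscale :: 'k \<Rightarrow> (mat \<Rightarrow> 'k) \<Rightarrow> _" by (rule vs)
  define \<rho>' where "\<rho>' v = (SOME e. e \<in> A \<and> g e = v)" for v
  define \<rho> where "\<rho> d = \<rho>' (g d)" for d
  have \<rho>'p: "\<rho>' v \<in> A \<and> g (\<rho>' v) = v" if vA: "v \<in> g ` A" for v
  proof -
    obtain e where e: "e \<in> A" "g e = v" using vA by auto
    show ?thesis unfolding \<rho>'_def by (rule someI[of "\<lambda>e. e \<in> A \<and> g e = v" e]) (use e in simp)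
  qed
  have \<rho>p: "\<rho> d \<in> A" "g (\<rho> d) = g d" if "d \<in> A" for d
  proof -
    have "g d \<in> g ` A" using that by simp
    from \<rho>'p[OF this] show "\<rho> d \<in> A" "g (\<rho> d) = g d" unfolding \<rho>_def by simp_all
  qed
  define R where "R = \<rho> ` A"
  have RA: "R \<subseteq> A" using \<rho>p by (auto simp: R_def)
  have Rfix: "\<rho> d = d" if "d \<in> R" for d
    using that \<rho>p by (auto simp: R_def \<rho>_def)
  have cR: "card R = card (g ` A)"
  proof -
    have "R = \<rho>' ` (g ` A)" by (auto simp: R_def \<rho>_def)
    moreover have "inj_on \<rho>' (g ` A)" by (rule inj_on_inverseI[where g = g]) (use \<rho>'p in auto)
    ultimately show ?thesis by (simp add: card_image)
  qed
  define h where "h d = (F d - F (\<rho> d) :: mat \<Rightarrow> 'k)" for d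
  define B where "B = h ` (A - R)"
  define D where "D = ({F d1 - F d2 | d1 d2. d1 \<in> A \<and> d2 \<in> A \<and> g d1 = g d2} :: (mat \<Rightarrow> 'k) set)"
  have hval: "h e d0 = (if e = d0 then 1 else 0)" if "d0 \<notin> R" "e \<in> A" for e d0
  proof -
    have "\<rho> e \<in> R" using that by (auto simp: R_def)
    then have "\<rho> e \<noteq> d0" using that by auto
    then show ?thesis by (auto simp: h_def F_apply)
  qed
  have injh: "inj_on h (A - R)"
  proof (rule inj_onI)
    fix x y assume x: "x \<in> A - R" and y: "y \<in> A - R" and e: "h x = h y"
    have "h x x = h y x" using e by simp
    then show "x = y" using hval[of x x] hval[of x y] x y by (auto split: if_splits)
  qed
  have BD: "B \<subseteq> D"
  proof
    fix x assume "x \<in> B"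
    then obtain d where d: "x = h d" "d \<in> A" by (auto simp: B_def)
    show "x \<in> D" unfolding D_def using d \<rho>p[OF d(2)] unfolding h_def
      by (intro CollectI exI[of _ d] exI[of _ "\<rho> d"]) simp
  qed
  have DB: "D \<subseteq> span B"
  proof
    fix x assume "x \<in> D"
    then obtain d1 d2 where x: "x = F d1 - F d2" "d1 \<in> A" "d2 \<in> A" "g d1 = g d2" by (auto simp: D_def)
    have hs: "h d \<in> span B" if "d \<in> A" for d
    proof (cases "d \<in> R")
      case True then show ?thesis using Rfix by (simp add: h_def span_zero)
    next
      case False then show ?thesis using that by (auto simp: B_def intro: span_base)
    qed
    have "x = h d1 - h d2" using x by (simp add: h_def \<rho>_def)
    then show "x \<in> span B" using hs x by (simp add: span_diff)
  qed
  have spanEq: "span D = span B"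
  proof
    show "span D \<subseteq> span B" by (rule span_minimal[OF DB subspace_span])
    show "span B \<subseteq> span D" using BD by (rule span_mono)
  qed
  have finB: "finite B" using finA by (simp add: B_def)
  have indB: "independent B"
    unfolding dependent_explicit
  proof clarify
    fix T u v assume T: "finite T" "T \<subseteq> B" "(\<Sum>v\<in>T. fscale (u v) v) = 0" "v \<in> T" "u v \<noteq> 0"
    obtain d0 where d0: "v = h d0" "d0 \<in> A - R" using T by (auto simp: B_def)
    have "0 = (\<Sum>w\<in>T. fscale (u w) w) d0" using T by simp
    also have "\<dots> = (\<Sum>w\<in>T. u w * w d0)" by (simp add: sum_fun_apply fscale_def)
    also have "\<dots> = (\<Sum>w\<in>T. if w = v then u w else 0)"
    proof (intro sum.cong refl)
      fix w assume "w \<in> T"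
      then obtain e where e: "w = h e" "e \<in> A - R" using T by (auto simp: B_def)
      show "u w * w d0 = (if w = v then u w else 0)"
      proof (cases "e = d0")
        case True then show ?thesis using d0 e hval by simp
      next
        case False
        then have "w \<noteq> v" using d0 e injh by (auto simp: inj_on_def)
        then show ?thesis using d0 e False hval by simp
      qed
    qed
    also have "\<dots> = u v" using T by simp
    finally show False using T by simp
  qed
  have "dim (span D) = dim B" using span_eq_dim[OF spanEq] by simp
  also have "\<dots> = card B" by (rule dim_eq_card_independent[OF indB])
  also have "\<dots> = card (A - R)" unfolding B_def by (rule card_image[OF injh])
  also have "\<dots> = card A - card (g ` A)" using RA finA cR by (simp add: card_Diff_subset finite_subset)
  finally show ?thesis unfolding D_def .
qed


lemma nw_image: "nw n ` ASMs n = {0..n choose 2}"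
proof (intro equalityI subsetI)
  fix v assume "v \<in> nw n ` ASMs n"
  then show "v \<in> {0..n choose 2}" using nw_le by (auto simp: ASMs_def)
next
  fix v assume "v \<in> {0..n choose 2}"
  then obtain \<sigma> where s: "bij_betw \<sigma> {..<n} {..<n}" "NI n \<sigma> = v" using NI_exists by auto
  have "pm n \<sigma> \<in> ASMs n" using pm_ASM[OF s(1)] by (simp add: ASMs_def)
  moreover have "nw n (pm n \<sigma>) = v" using nw_pm[OF s(1)] s(2) by simp
  ultimately show "v \<in> nw n ` ASMs n" by (metis imageI)
qed

theorem proposition4p7:
  fixes n :: nat
  shows "quot_dim (ASM_comp n :: (mat \<Rightarrow> 'k::field_char_0) set) (Inw_comp n) = (n choose 2) + 1"
proof -
  have le: "card (nw n ` ASMs n) \<le> card (ASMs n)" by (rule card_image_le[OF fin_ASMs])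
  have "quot_dim (ASM_comp n :: (mat \<Rightarrow> 'k) set) (Inw_comp n)
      = card (ASMs n) - (card (ASMs n) - card (nw n ` ASMs n))"
    unfolding quot_dim_def dim_ASM_comp Inw_comp_def Inw_dim[OF fin_ASMs] ..
  also have "\<dots> = card (nw n ` ASMs n)" using le by simp
  also have "\<dots> = (n choose 2) + 1" by (simp add: nw_image)
  finally show ?thesis .
qed


end
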